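(* If the radius of convergence of $G(t)=\sum_{k\ge0}\mu_k t^k$ is strictly smaller than $q/(1-q)$, then the parking process is supercritical.
   Context: Fix $q\in(1/2,1)$. Let $\mathcal T$ be a Bienaymé–Galton–Watson plane tree rooted at $\varnothing$ with geometric offspring distribution $\nu(k)=q^k(1-q)$, $k\ge 0$. Let $\mu$ be a probability law on $\{0,1,2,\dots\}$ with $\mu(\{0,1\})<1$, $\mu_k=\mu(\{k\})$. Conditionally on $\mathcal T$, let $(A_u)_{u\in\mathcal T}$ be i.i.d. with law $\mu$ (numbers of cars arriving at the vertices). Parking rule: each vertex can hold at most one car; each car goes to its arrival vertex, parks there if free, otherwise drives towards the root and parks at the first free vertex on its way; if none, it exits through the root. For $n\ge0$, park only the cars arriving at vertices of height at most $n$ and let $X_n(u)$ be the number of cars visiting $u$; $X(u)=\lim_n X_n(u)\in\{0,1,\dots\}\cup\{\infty\}$, $X:=X(\varnothing)$. The parking process is subcritical if $X<\infty$ a.s. and supercritical otherwise. *)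

theory Defs
  imports "HOL-Probability.Probability"
begin

text \<open>Vertices are Ulam-Harris words (nat lists); the root is the empty list and the
children of u are u @ [i]. A sample point w assigns to every word u a pair
(number of children K u, number of arriving cars A u). The GW tree consists of the words
u = [i1,...,ik] with i(j+1) < K [i1,...,ij] for all j.\<close>

text \<open>park_visits d w u = number of cars visiting u when only cars arriving at vertices of the
subtree of u within distance d from u are parked. A car leaves the subtree of a child v of u
(and hence visits u) iff it visits v and v is already occupied, so the flow from v to u is
max(X(v)-1,0) (truncated subtraction on nat).\<close>
fun park_visits :: "nat \<Rightarrow> (nat list \<Rightarrow> nat \<times> nat) \<Rightarrow> nat list \<Rightarrow> nat" where
  "park_visits 0 w u = snd (w u)"
| "park_visits (Suc d) w u =
     snd (w u) + (\<Sum>i<fst (w u). park_visits d w (u @ [i]) - 1)"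

definition X_n :: "nat \<Rightarrow> (nat list \<Rightarrow> nat \<times> nat) \<Rightarrow> nat" where
  "X_n n w = park_visits n w []"

text \<open>X = lim X_n (X_n is nondecreasing in n, so the limit is the supremum).\<close>
definition X_root :: "(nat list \<Rightarrow> nat \<times> nat) \<Rightarrow> enat" where
  "X_root w = (SUP n. enat (X_n n w))"

definition parking_space :: "nat pmf \<Rightarrow> nat pmf \<Rightarrow> (nat list \<Rightarrow> nat \<times> nat) measure" where
  "parking_space nu mu = (\<Pi>\<^sub>M u\<in>(UNIV :: nat list set). measure_pmf (pair_pmf nu mu))"

definition supercritical :: "nat pmf \<Rightarrow> nat pmf \<Rightarrow> bool" where
  "supercritical nu mu \<longleftrightarrow> \<not> (AE w in parking_space nu mu. X_root w < \<infinity>)"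

end

theory Submission imports Defs begin

definition shift :: "nat \<Rightarrow> (nat list \<Rightarrow> nat \<times> nat) \<Rightarrow> (nat list \<Rightarrow> nat \<times> nat)" where
  "shift i w = (\<lambda>v. w (i # v))"

fun good :: "nat \<Rightarrow> nat \<Rightarrow> (nat list \<Rightarrow> nat \<times> nat) \<Rightarrow> bool" where
  "good 0 L w = (snd (w []) < L)"
| "good (Suc n) L w = (snd (w []) < L \<and> (\<forall>i. i < fst (w []) \<longrightarrow> good n (Suc L) (shift i w)))"

lemma pv_shift: "park_visits d w (i # u) = park_visits d (shift i w) u"
  by (induction d arbitrary: u) (simp_all add: shift_def)

lemma Xn_ge_A: "snd (w []) \<le> X_n n w"
  by (cases n) (simp_all add: X_n_def)

lemma Xn_child: assumes "i < fst (w [])" shows "X_n n (shift i w) - 1 \<le> X_n (Suc n) w"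
proof -
  have "X_n n (shift i w) - 1 = park_visits n w [i] - 1"
    by (simp add: X_n_def pv_shift)
  also have "\<dots> \<le> (\<Sum>j<fst (w []). park_visits n w [j] - 1)"
    by (rule member_le_sum[where i=i]) (use assms in auto)
  also have "\<dots> \<le> X_n (Suc n) w" by (simp add: X_n_def)
  finally show ?thesis .
qed

lemma not_good_X: "\<not> good n L w \<Longrightarrow> L \<le> X_n n w"
proof (induction n arbitrary: L w)
  case 0 then show ?case using Xn_ge_A[of w 0] by simp
next
  case (Suc n)
  show ?case
  proof (cases "snd (w []) < L")
    case False then show ?thesis using Xn_ge_A[of w "Suc n"] by simp
  next
    case True
    then obtain i where i: "i < fst (w [])" "\<not> good n (Suc L) (shift i w)" using Suc.prems by auto
    have "Suc L \<le> X_n n (shift i w)" using Suc.IH[OF i(2)] .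
    then show ?thesis using Xn_child[of i w n, OF i(1)] by linarith
  qed
qed

lemma not_good_X_root: "\<not> good n L w \<Longrightarrow> enat L \<le> X_root w"
  unfolding X_root_def using not_good_X by (meson SUP_upper2 UNIV_I enat_ord_simps(1))

lemma good_mono: "good n L w \<Longrightarrow> good n (Suc L) w"
  by (induction n arbitrary: L w) auto

abbreviation "PP nu mu \<equiv> measure_pmf (pair_pmf nu mu)"

lemma shift_meas: "shift i \<in> measurable (parking_space nu mu) (parking_space nu mu)"
  unfolding parking_space_def shift_def
  by (rule measurable_PiM_single') (auto simp: space_PiM)

lemma good_meas: "Measurable.pred (parking_space nu mu) (good n L)"
proof (induction n arbitrary: L)
  case 0
  have "(\<lambda>w. w []) \<in> measurable (parking_space nu mu) (PP nu mu)"
    unfolding parking_space_def by measurable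
  then show ?case by simp
next
  case (Suc n)
  have c: "(\<lambda>w. w []) \<in> measurable (parking_space nu mu) (count_space UNIV)"
    unfolding parking_space_def by measurable
  have s: "Measurable.pred (parking_space nu mu) (\<lambda>w. good n (Suc L) (shift i w))" for i
    using measurable_compose[OF shift_meas Suc.IH] by simp
  show ?case using c s by simp measurable
qed

lemma ps_prob: "prob_space (parking_space nu mu)"
  by (simp add: parking_space_def prob_space_PiM prob_space_measure_pmf)

lemma space_ps: "space (parking_space nu mu) = UNIV"
  by (simp add: parking_space_def space_PiM)

lemma shift_distr: "distr (parking_space nu mu) (parking_space nu mu) (shift i) = parking_space nu mu"
  using distr_PiM_reindex[of UNIV "\<lambda>_. PP nu mu" "Cons i" UNIV]
proof -
  have e: "shift i = (\<lambda>\<omega> n. \<omega> (i # n))" by (simp add: fun_eq_iff shift_def)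
  show ?thesis
  using distr_PiM_reindex[of UNIV "\<lambda>_. PP nu mu" "Cons i" UNIV]
  by (simp add: parking_space_def e restrict_UNIV prob_space_measure_pmf)
qed

lemma shift_prob: assumes "S \<in> sets (parking_space nu mu)"
  shows "measure (parking_space nu mu) (shift i -` S \<inter> space (parking_space nu mu)) = measure (parking_space nu mu) S"
  using measure_distr[OF shift_meas assms, of i] shift_distr[of nu mu i] by simp

lemma root_prob: "measure (parking_space nu mu) ((\<lambda>w. w []) -` A \<inter> space (parking_space nu mu)) = measure (PP nu mu) A"
proof -
  have m: "(\<lambda>w. w []) \<in> measurable (parking_space nu mu) (PP nu mu)"
    unfolding parking_space_def by measurable
  have "distr (parking_space nu mu) (PP nu mu) (\<lambda>w. w []) = PP nu mu"
    unfolding parking_space_def by (rule distr_PiM_component) (auto simp: prob_space_measure_pmf)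
  then show ?thesis using measure_distr[OF m, of A] by simp
qed

lemma coord_indep: "prob_space.indep_vars (parking_space nu mu) (\<lambda>_. PP nu mu) (\<lambda>v w. w v) UNIV"
proof -
  interpret prob_space "parking_space nu mu" by (rule ps_prob)
  have rv: "random_variable (PP nu mu) (\<lambda>w. w v)" for v
    unfolding parking_space_def by measurable
  have d: "distr (parking_space nu mu) (PP nu mu) (\<lambda>w. w v) = PP nu mu" for v
    unfolding parking_space_def by (rule distr_PiM_component) (auto simp: prob_space_measure_pmf)
  show ?thesis
    apply (subst indep_vars_iff_distr_eq_PiM[OF _ rv])
     apply simp
    apply (simp add: restrict_UNIV d)
    apply (simp add: parking_space_def)
    done
qed


definition blk :: "nat option \<Rightarrow> nat list set" where
  "blk j = (case j of None \<Rightarrow> {[]} | Some i \<Rightarrow> range (Cons i))"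

definition blkf :: "nat option \<Rightarrow> (nat list \<Rightarrow> nat \<times> nat) \<Rightarrow> (nat list \<Rightarrow> nat \<times> nat) + (nat list \<Rightarrow> nat \<times> nat)" where
  "blkf j r = (case j of None \<Rightarrow> Inl (\<lambda>_. r []) | Some i \<Rightarrow> Inr (\<lambda>v. r (i # v)))"

lemma key:
  assumes S: "S \<in> sets (parking_space nu mu)"
  shows "measure (parking_space nu mu) {w \<in> space (parking_space nu mu). fst (w []) = k \<and> (\<forall>i<k. shift i w \<in> S)}
       = pmf nu k * measure (parking_space nu mu) S ^ k"
proof -
  interpret prob_space "parking_space nu mu" by (rule ps_prob)
  let ?M = "parking_space nu mu"
  have ind2: "indep_vars (\<lambda>j. PiM (blk j) (\<lambda>_. PP nu mu)) (\<lambda>j w. restrict w (blk j)) UNIV"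
  proof -
    have "disjoint_family_on blk UNIV"
      unfolding disjoint_family_on_def blk_def by (auto split: option.splits)
    then show ?thesis using indep_vars_restrict[OF coord_indep[of nu mu], of UNIV blk] by simp
  qed
  define N where "N j = ?M" for j :: "nat option"
  define Yc where "Yc j = (case j of None \<Rightarrow> (\<lambda>(r::nat list \<Rightarrow> nat \<times> nat) v. r []) | Some i \<Rightarrow> (\<lambda>r v. r (i # v)))" for j :: "nat option"
  have mY: "Yc j \<in> measurable (PiM (blk j) (\<lambda>_. PP nu mu)) (N j)" for j
  proof (cases j)
    case None show ?thesis unfolding None Yc_def N_def parking_space_def
      by (simp, rule measurable_PiM_single') (auto simp: blk_def space_PiM)
  next
    case (Some i)
    show ?thesis unfolding Some Yc_def N_def parking_space_def
      by (simp, rule measurable_PiM_single') (auto simp: blk_def space_PiM)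
  qed
  have ind3: "indep_vars N (\<lambda>j w. Yc j (restrict w (blk j))) UNIV"
    by (rule indep_vars_compose2[OF ind2 mY])
  define J where "J = insert None (Some ` {..<k})"
  define A where "A j = (case j of None \<Rightarrow> {f \<in> space ?M. fst (f []) = k} | Some i \<Rightarrow> S)" for j :: "nat option"
  have Y1: "Yc None (restrict w (blk None)) = (\<lambda>v. w [])" for w by (simp add: Yc_def blk_def)
  have Ameas: "{f \<in> space ?M. fst (f []) = k} \<in> sets ?M"
    unfolding parking_space_def by measurable
  have Y2: "Yc (Some i) (restrict w (blk (Some i))) = shift i w" for w i by (simp add: Yc_def blk_def shift_def)
  have YN: "(\<lambda>w. Yc None (restrict w (blk None))) -` A None \<inter> space ?M = (\<lambda>w. w []) -` {x. fst x = k} \<inter> space ?M"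
    by (auto simp: A_def Y1 space_ps)
  have "prob (\<Inter>j\<in>J. (\<lambda>w. Yc j (restrict w (blk j))) -` A j \<inter> space ?M) =
        (\<Prod>j\<in>J. prob ((\<lambda>w. Yc j (restrict w (blk j))) -` A j \<inter> space ?M))"
    by (rule indep_varsD[OF ind3]) (auto simp: J_def A_def N_def S Ameas split: option.splits)
  also have "(\<Inter>j\<in>J. (\<lambda>w. Yc j (restrict w (blk j))) -` A j \<inter> space ?M) =
     {w \<in> space ?M. fst (w []) = k \<and> (\<forall>i<k. shift i w \<in> S)}"
    by (auto simp: J_def A_def Y1 Y2 space_ps)

  also have "(\<Prod>j\<in>J. prob ((\<lambda>w. Yc j (restrict w (blk j))) -` A j \<inter> space ?M)) =
      prob ((\<lambda>w. w []) -` {x. fst x = k} \<inter> space ?M) * (\<Prod>i<k. prob (shift i -` S \<inter> space ?M))"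
    unfolding J_def by (simp add: prod.reindex YN, simp add: A_def Y2)
  also have "\<dots> = pmf nu k * prob S ^ k"
  proof -
    have "measure (PP nu mu) {x. fst x = k} = pmf nu k"
    proof -
      have "measure (PP nu mu) {x. fst x = k} = measure (map_pmf fst (pair_pmf nu mu)) {k}"
        by (simp add: vimage_def)
      then show ?thesis by (simp add: map_fst_pair_pmf measure_pmf_single)
    qed
    then have "prob ((\<lambda>w. w []) -` {x. fst x = k} \<inter> space ?M) = pmf nu k"
      using root_prob[of nu mu "{x. fst x = k}"] by simp
    then show ?thesis by (simp only: shift_prob[OF S] prod_constant card_lessThan)
  qed
  finally show ?thesis .
qed


definition gset :: "nat \<Rightarrow> nat \<Rightarrow> (nat list \<Rightarrow> nat \<times> nat) set" where
  "gset n L = {w. good n L w}"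

lemma gset_sets: "gset n L \<in> sets (parking_space nu mu)"
proof -
  have "{w \<in> space (parking_space nu mu). good n L w} \<in> sets (parking_space nu mu)"
    using good_meas by measurable
  then show ?thesis by (simp add: gset_def space_ps)
qed

lemma recur:
  assumes q: "0 < q" "q < 1" and nu: "\<And>k. pmf nu k = q ^ k * (1 - q)"
  shows "measure (parking_space nu mu) (gset (Suc n) L)
     \<le> (1 - q) / (1 - q * measure (parking_space nu mu) (gset n (Suc L)))"
proof -
  interpret prob_space "parking_space nu mu" by (rule ps_prob)
  let ?M = "parking_space nu mu"
  let ?S = "gset n (Suc L)"
  let ?p = "prob ?S"
  define B where "B k = {w \<in> space ?M. fst (w []) = k \<and> (\<forall>i<k. shift i w \<in> ?S)}" for k
  have Bs: "B k \<in> events" for k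
  proof -
    have e: "B k = {w \<in> space ?M. fst (w []) = k} \<inter> (\<Inter>i\<in>{..<k}. shift i -` ?S \<inter> space ?M) \<inter> space ?M"
      unfolding B_def by auto
    have a: "{w \<in> space ?M. fst (w []) = k} \<in> events"
      unfolding parking_space_def by measurable
    have b: "shift i -` ?S \<inter> space ?M \<in> events" for i
      by (rule measurable_sets[OF shift_meas gset_sets])
    have top: "UNIV \<in> events" using sets.top[of ?M] by (simp add: space_ps)
    have c: "(\<Inter>i\<in>{..<k}. shift i -` ?S \<inter> space ?M) \<inter> space ?M \<in> events"
    proof (cases "k = 0")
      case True then show ?thesis by simp
    next
      case False then show ?thesis using b by (intro sets.Int sets.finite_INT) (auto simp: space_ps top)
    qed
    show ?thesis unfolding e using a c by (metis (no_types, lifting) inf_assoc sets.Int)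
  qed
  have disj: "disjoint_family B" unfolding disjoint_family_on_def B_def by auto
  have sub: "gset (Suc n) L \<subseteq> (\<Union>k. B k)"
    by (auto simp: gset_def B_def space_ps)
  have sums: "(\<lambda>k. prob (B k)) sums prob (\<Union>k. B k)"
    by (rule measure_UNION) (use Bs disj in auto)
  have pB: "prob (B k) = (1 - q) * (q * ?p) ^ k" for k
    unfolding B_def key[OF gset_sets] nu by (simp only: power_mult_distrib mult.commute mult.left_commute)
  have p01: "0 \<le> ?p" "?p \<le> 1" by auto
  have qp: "norm (q * ?p) < 1" using q p01
  proof -
    have a: "q * ?p \<le> q" using q p01 by (simp add: mult_left_le)
    have b: "0 \<le> q * ?p" using q p01 by simp
    have "norm (q * ?p) = q * ?p" using b by simp
    then show ?thesis using a q by linarith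
  qed
  have "(\<lambda>k. (1 - q) * (q * ?p) ^ k) sums ((1 - q) * (1 / (1 - q * ?p)))"
    by (rule sums_mult[OF geometric_sums[OF qp]])
  with sums pB have "prob (\<Union>k. B k) = (1 - q) / (1 - q * ?p)"
    by (simp add: sums_iff)
  moreover have "prob (gset (Suc n) L) \<le> prob (\<Union>k. B k)"
    by (rule finite_measure_mono[OF sub]) (use Bs in auto)
  ultimately show ?thesis by simp
qed


lemma step_real:
  fixes q y h' B :: real
  assumes q: "0 < q" "q < 1" and y: "0 < y" and h: "q * y / (1 - q + q * y) \<le> h'" and B: "1 / y \<le> B"
  shows "0 < h'" "1 / h' \<le> B * (1 - q) / q + 1"
proof -
  have D: "0 < 1 - q + q * y" using q y by (simp add: add_pos_nonneg)
  have pos: "0 < q * y / (1 - q + q * y)" using q y D by simp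
  then show "0 < h'" using h by linarith
  have "1 / h' \<le> 1 / (q * y / (1 - q + q * y))"
  proof (rule divide_left_mono)
    have "0 < h'" using pos h by linarith
    then show "0 < h' * (q * y / (1 - q + q * y))" using pos by (rule mult_pos_pos)
  qed (use h in auto)
  also have "\<dots> = (1 - q) / q * (1 / y) + 1"
    using q y D by (simp add: field_simps)
  also have "\<dots> \<le> (1 - q) / q * B + 1"
    using q B by (intro add_right_mono mult_left_mono) auto
  finally show "1 / h' \<le> B * (1 - q) / q + 1" by (simp add: field_simps)
qed

lemma base_bound: "measure (parking_space nu mu) (gset 0 L) \<le> 1 - pmf mu L"
proof -
  have "measure (parking_space nu mu) (gset 0 L) =
     measure (parking_space nu mu) ((\<lambda>w. w []) -` {x. snd x < L} \<inter> space (parking_space nu mu))"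
    by (simp add: gset_def space_ps vimage_def)
  also have "\<dots> = measure (PP nu mu) {x. snd x < L}" by (rule root_prob)
  also have "\<dots> = measure (measure_pmf (map_pmf snd (pair_pmf nu mu))) {..<L}"
    by (simp add: vimage_def lessThan_def)
  also have "\<dots> = measure mu {..<L}" by (simp add: map_snd_pair_pmf)
  also have "\<dots> = measure mu ({..<L} \<union> {L}) - pmf mu L"
    by (subst measure_pmf.finite_measure_Union) (auto simp: measure_pmf_single)
  also have "\<dots> \<le> 1 - pmf mu L" by (simp add: measure_pmf.prob_le_1)
  finally show ?thesis .
qed

lemma iter_bound:
  assumes q: "1/2 < q" "q < 1" and nu: "\<And>k. pmf nu k = q ^ k * (1 - q)"
  and x: "0 < x" "x \<le> pmf mu (L + n)"
  shows "0 < 1 - measure (parking_space nu mu) (gset n L) \<and>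
    1 / (1 - measure (parking_space nu mu) (gset n L)) \<le> 1 / (x * (q / (1 - q)) ^ n) + (q / (1 - q)) / (q / (1 - q) - 1)"
  using x
proof (induction n arbitrary: L)
  case 0
  define m where "m = q / (1 - q)"
  have m1: "1 < m" using q by (simp add: m_def field_simps)
  have h: "x \<le> 1 - measure (parking_space nu mu) (gset 0 L)"
    using base_bound[of nu mu L] 0 by simp
  have "1 / (1 - measure (parking_space nu mu) (gset 0 L)) \<le> 1 / x"
    using h 0 by (intro divide_left_mono) auto
  moreover have "0 \<le> m / (m - 1)" using m1 by simp
  ultimately show ?case using h 0 by (simp add: m_def[symmetric])
next
  case (Suc n)
  define m where "m = q / (1 - q)"
  have m1: "1 < m" using q by (simp add: m_def field_simps)
  define y where "y = 1 - measure (parking_space nu mu) (gset n (Suc L))"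
  define B where "B = 1 / (x * m ^ n) + m / (m - 1)"
  have IH: "0 < y" "1 / y \<le> B"
    using Suc.IH[of "Suc L"] Suc.prems by (simp_all add: y_def B_def m_def)
  have r: "measure (parking_space nu mu) (gset (Suc n) L) \<le> (1 - q) / (1 - q + q * y)"
    using recur[of q nu mu n L] q nu by (simp add: y_def algebra_simps)
  have D: "0 < 1 - q + q * y" using q IH by (simp add: add_pos_nonneg)
  have hh: "q * y / (1 - q + q * y) \<le> 1 - measure (parking_space nu mu) (gset (Suc n) L)"
  proof -
    have "q * y / (1 - q + q * y) = 1 - (1 - q) / (1 - q + q * y)"
      using D by (simp add: field_simps)
    then show ?thesis using r by linarith
  qed
  have q0: "0 < q" "q < 1" using q by auto
  note st = step_real[OF q0 IH(1) hh IH(2)]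
  have "B * (1 - q) / q + 1 = 1 / (x * m ^ Suc n) + m / (m - 1)"
  proof -
    have e: "B * (1 - q) / q = B / m" using q by (simp add: m_def field_simps)
    have "B / m + 1 = 1 / (x * m ^ Suc n) + m / (m - 1)"
      using m1 Suc.prems unfolding B_def by (simp add: field_simps)
    then show ?thesis using e by simp
  qed
  then show ?case using st by (simp add: m_def)
qed


lemma freq:
  fixes m :: real
  assumes m: "0 < m" and rad: "conv_radius (\<lambda>k. pmf mu k) < ereal m"
  shows "\<exists>k\<ge>L. 1 \<le> pmf mu k * m ^ (k - L)"
proof (rule ccontr)
  assume "\<not> ?thesis"
  then have lt: "\<And>k. k \<ge> L \<Longrightarrow> pmf mu k * m ^ (k - L) < 1" by (metis not_le)
  have "ereal m \<le> conv_radius (\<lambda>k. pmf mu k)"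
  proof (rule conv_radius_geI_ex')
    fix r :: real assume r: "0 < r" "ereal r < ereal m"
    have rm: "r < m" using r by simp
    have "summable (\<lambda>n. m ^ L * (r / m) ^ n)"
      using r rm m by (intro summable_mult) (simp add: abs_of_pos)
    then show "summable (\<lambda>n. pmf mu n * of_real r ^ n)"
    proof (rule summable_comparison_test')
      fix n assume n: "L \<le> n"
      have p: "pmf mu n \<le> 1 / m ^ (n - L)"
        using lt[OF n] m by (simp add: field_simps)
      also have "\<dots> = m ^ L / m ^ n" using n m by (simp add: power_diff)
      finally have "pmf mu n * r ^ n \<le> m ^ L / m ^ n * r ^ n"
        using r by (intro mult_right_mono) auto
      also have "\<dots> = m ^ L * (r / m) ^ n" by (simp add: power_divide)
      finally show "norm (pmf mu n * of_real r ^ n) \<le> m ^ L * (r / m) ^ n"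
        using r by (simp add: abs_mult abs_of_pos)
    qed
  qed
  with rad show False by simp
qed


theorem mainTheorem3:
  fixes q :: real and nu mu :: "nat pmf"
  assumes q: "1/2 < q" "q < 1"
    and nu: "\<And>k. pmf nu k = q ^ k * (1 - q)"
    and mu01: "pmf mu 0 + pmf mu 1 < 1"
    and radius: "conv_radius (\<lambda>k. pmf mu k) < ereal (q / (1 - q))"
  shows "supercritical nu mu"
proof -
  let ?M = "parking_space nu mu"
  interpret prob_space ?M by (rule ps_prob)
  define m where "m = q / (1 - q)"
  have m1: "1 < m" using q by (simp add: m_def field_simps)
  define C where "C = 1 + m / (m - 1)"
  have C0: "0 < C" using m1 by (simp add: C_def add_pos_nonneg)
  define \<delta> where "\<delta> = 1 / C"
  have d0: "0 < \<delta>" using C0 by (simp add: \<delta>_def)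
  have each: "\<exists>n. \<delta> \<le> 1 - prob (gset n L)" for L
  proof -
    obtain k where k: "k \<ge> L" "1 \<le> pmf mu k * m ^ (k - L)"
      using freq[of m mu L] m1 radius by (auto simp: m_def)
    have x0: "0 < pmf mu k"
    proof (rule ccontr)
      assume "\<not> 0 < pmf mu k"
      then have "pmf mu k = 0" using pmf_nonneg[of mu k] by linarith
      then show False using k by simp
    qed
    have Lk: "L + (k - L) = k" using k by simp
    have ib: "0 < 1 - prob (gset (k - L) L) \<and>
       1 / (1 - prob (gset (k - L) L)) \<le> 1 / (pmf mu k * m ^ (k - L)) + m / (m - 1)"
      using iter_bound[of q nu "pmf mu k" mu L "k - L"] q nu x0 Lk by (simp add: m_def)
    have "1 / (pmf mu k * m ^ (k - L)) \<le> 1" using k by simp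
    then have le: "1 / (1 - prob (gset (k - L) L)) \<le> C" using ib by (simp add: C_def)
    have "1 / C \<le> 1 - prob (gset (k - L) L)"
    proof -
      let ?h = "1 - prob (gset (k - L) L)"
      have "0 < ?h" using ib by simp
      then have "1 \<le> C * ?h" using le by (simp add: field_simps)
      then show ?thesis using C0 by (simp add: field_simps)
    qed
    then show ?thesis unfolding \<delta>_def by blast
  qed
  define A where "A L = (\<Union>n. space ?M - gset n L)" for L
  have Aev: "A L \<in> events" for L
  proof -
    have "space ?M - gset n L \<in> events" for n
      using sets.compl_sets[OF gset_sets[of n L nu mu]] .
    then show ?thesis unfolding A_def by (intro sets.countable_UN') auto
  qed
  have Ad: "\<delta> \<le> prob (A L)" for L
  proof -
    obtain n where n: "\<delta> \<le> 1 - prob (gset n L)" using each by blast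
    have "prob (space ?M - gset n L) = 1 - prob (gset n L)"
      using prob_compl[OF gset_sets[of n L nu mu]] by simp
    moreover have "space ?M - gset n L \<subseteq> A L" by (auto simp: A_def)
    then have "prob (space ?M - gset n L) \<le> prob (A L)"
      by (rule finite_measure_mono[OF _ Aev])
    ultimately show ?thesis using n by linarith
  qed
  have dec: "decseq A"
  proof (rule decseq_SucI)
    fix L show "A (Suc L) \<subseteq> A L"
      unfolding A_def gset_def using good_mono by blast
  qed
  have lim: "(\<lambda>L. prob (A L)) \<longlonglongrightarrow> prob (\<Inter>L. A L)"
    by (rule finite_Lim_measure_decseq) (use Aev dec in auto)
  have Id: "\<delta> \<le> prob (\<Inter>L. A L)"
    by (rule LIMSEQ_le_const[OF lim]) (use Ad in auto)
  have Iev: "(\<Inter>L. A L) \<in> events" using Aev by auto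
  have Iinf: "X_root w = \<infinity>" if "w \<in> (\<Inter>L. A L)" for w
  proof -
    have "enat L \<le> X_root w" for L
    proof -
      from that obtain n where "\<not> good n L w" by (auto simp: A_def gset_def)
      then show ?thesis by (rule not_good_X_root)
    qed
    then show ?thesis
      by (metis enat_ord_simps(2) infinity_ileE le_less_Suc_eq lessI not_less_eq_eq not_infinity_eq enat_ord_simps(1))
  qed
  show ?thesis
    unfolding supercritical_def
  proof
    assume ae: "AE w in ?M. X_root w < \<infinity>"
    have "AE w in ?M. w \<notin> (\<Inter>L. A L)"
      using ae by eventually_elim (use Iinf in force)
    then have "emeasure ?M (\<Inter>L. A L) = 0"
      by (subst (asm) AE_iff_measurable[OF Iev]) (auto simp: space_ps)
    then have "prob (\<Inter>L. A L) = 0" by (simp add: measure_def)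
    then show False using Id d0 by simp
  qed
qed

end
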